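(* For every integer $k\geq0$, \[ \mathrm{Res}_{z=0}\, (\wp(z) - 4 G_2)^{k+\frac{1}{2}} = 2 \left[ \sqrt{ \wp(p,q) - 4G_2(q) }^{\,2k+1} \right]_{p^0} + O(q^{k+1}), \] as power series in $q$.
   Context: For even $k\geq2$, $G_k(q)=-\frac{B_k}{2k}+\sum_{n\geq1}\sum_{d|n}d^{k-1}q^n$ ($B_k$ Bernoulli numbers), and $G_k:=0$ for odd $k$. Left side: $\wp(z)=z^{-2}+2\sum_{k\geq4}G_k\frac{z^{k-2}}{(k-2)!}$ as a formal Laurent series in $z$ with coefficients power series in $q$; $(\wp-4G_2)^{1/2}$ is the unique formal square root of $\wp(z)-4G_2$ of the form $z^{-1}+O(z)$, $(\wp-4G_2)^{k+\frac12}:=(\wp-4G_2)^k(\wp-4G_2)^{1/2}$, and $\mathrm{Res}_{z=0}$ is the $z^{-1}$-coefficient. Right side: $\wp(p,q)=\frac{1}{12}+\frac{p}{(1-p)^2}+\sum_{d\geq1}\sum_{k|d}k(p^k-2+p^{-k})q^d$; $\sqrt{\wp(p,q)-4G_2(q)}$ is the unique power series in $q$ with coefficients rational functions of $p$ whose square is $\wp(p,q)-4G_2(q)$ and whose $q^0$-coefficient is $\frac12\frac{p+1}{p-1}$; $[\cdot]_{p^0}$ expands each $q$-coefficient as a Laurent series in $p^{-1}$ (region $|p|>1$) and takes its constant term. *)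

theory Defs
  imports "HOL-Computational_Algebra.Formal_Power_Series"
          "HOL-Computational_Algebra.Formal_Laurent_Series"
begin

text \<open>Bernoulli numbers (convention B_0 = 1, B_1 = -1/2, B_2 = 1/6), via the
  standard recursion  sum_{j<=n} binom(n+1,j) B_j = 0  for n >= 1.\<close>
fun bernoulli_num :: "nat \<Rightarrow> rat" where
  "bernoulli_num n =
     (if n = 0 then 1
      else - (\<Sum>j<n. of_nat ((n + 1) choose j) * bernoulli_num j) / of_nat (n + 1))"

declare bernoulli_num.simps [simp del]

definition G :: "nat \<Rightarrow> rat fps" where
  "G k = (if even k \<and> k \<ge> 2 then
            fps_const (- bernoulli_num k / (2 * of_nat k))
            + Abs_fps (\<lambda>n. if n = 0 then 0
                            else (\<Sum>d\<in>{d. d dvd n}. of_nat d ^ (k - 1)))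
          else 0)"

text \<open>Weierstrass wp(z) as a formal Laurent series in z whose coefficients are
  power series in q:  z^-2 + 2 sum_{k>=4} G_k z^(k-2)/(k-2)!.\<close>
definition wp_z :: "rat fps fls" where
  "wp_z = fls_X_intpow (-2)
          + fps_to_fls (Abs_fps (\<lambda>m. if m \<ge> 2 then fps_const (2 / fact m) * G (m + 2)
                                       else 0))"

definition sqrt_wp_z :: "rat fps fls" where
  "sqrt_wp_z = (THE s. s ^ 2 = wp_z - 4 * fls_const (G 2)
                      \<and> (\<forall>n < -1. fls_nth s n = 0) \<and> fls_nth s (-1) = 1 \<and> fls_nth s 0 = 0)"

definition wp_z_half_pow :: "nat \<Rightarrow> rat fps fls" where
  "wp_z_half_pow k = (wp_z - 4 * fls_const (G 2)) ^ k * sqrt_wp_z"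

definition LHS :: "nat \<Rightarrow> rat fps" where
  "LHS k = fls_residue (wp_z_half_pow k)"

text \<open>Every rational function of p is represented by its
  expansion in the region |p| > 1, i.e. as a formal Laurent series in p^-1.
  We write x = p^-1 for the Laurent variable, so p itself is the element
  x^-1 = fls_X_inv of the field rat fls; rational expressions in p, evaluated
  in this field, are exactly their Laurent expansions in p^-1.\<close>
definition pvar :: "rat fls" where
  "pvar = fls_X_inv"

definition wp_pq :: "rat fls fps" where
  "wp_pq = Abs_fps (\<lambda>d. if d = 0 then 1 / 12 + pvar / (1 - pvar) ^ 2
                         else (\<Sum>k\<in>{k. k dvd d}.
                                 of_nat k * (pvar ^ k - 2 + inverse (pvar ^ k))))"

definition G2_pq :: "rat fls fps" where
  "G2_pq = Abs_fps (\<lambda>n. fls_const (fps_nth (G 2) n))"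

definition sqrt_wp_pq :: "rat fls fps" where
  "sqrt_wp_pq = (THE s. s ^ 2 = wp_pq - 4 * G2_pq
                       \<and> fps_nth s 0 = (pvar + 1) / (pvar - 1) / 2)"

definition const_term_p :: "rat fls fps \<Rightarrow> rat fps" where
  "const_term_p F = Abs_fps (\<lambda>n. fls_nth (fps_nth F n) 0)"

definition RHS :: "nat \<Rightarrow> rat fps" where
  "RHS k = 2 * const_term_p (sqrt_wp_pq ^ (2 * k + 1))"

end

theory Submission
  imports Defs
begin

lemma sq_unique_fps:
  fixes A B :: "'a::field_char_0 fps"
  assumes "A^2 = B^2" "A$0 = B$0" "B$0 \<noteq> 0"
  shows "A = B"
proof -
  have "(A - B) * (A + B) = 0" using assms(1) by (simp add: algebra_simps power2_eq_square)
  moreover have "(A + B) $ 0 \<noteq> 0" using assms(2,3) by simp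
  hence "A + B \<noteq> 0" by (metis fps_zero_nth)
  ultimately show ?thesis by simp
qed

lemma sqrt_generic:
  fixes s0 :: "'a::field_char_0" and U :: "'a fps"
  assumes s0: "s0 \<noteq> 0" and U0: "U$0 = 0"
  defines "Y \<equiv> fps_const (inverse (s0^2)) * U"
  defines "R \<equiv> fps_binomial (1/2) oo Y"
  shows "(fps_const s0 * R)^2 = fps_const (s0^2) + U"
    and "(fps_const s0 * R)$0 = s0"
    and "\<And>m. (fps_const s0 * R)^m = fps_const (s0^m) * (fps_binomial (of_nat m / 2) oo Y)"
proof -
  have Y0: "Y$0 = 0" using U0 by (simp add: Y_def)
  show pw: "(fps_const s0 * R)^m = fps_const (s0^m) * (fps_binomial (of_nat m / 2) oo Y)" for m
    by (simp add: power_mult_distrib R_def fps_compose_power[OF Y0] fps_binomial_power fps_const_power)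
  have "(fps_const s0 * R)^2 = fps_const (s0^2) * (fps_binomial 1 oo Y)"
    using pw[of 2] by simp
  also have "\<dots> = fps_const (s0^2) + U"
    using Y0 s0 by (simp add: fps_binomial_1 fps_compose_add_distrib Y_def algebra_simps flip: fps_const_mult)
  finally show "(fps_const s0 * R)^2 = fps_const (s0^2) + U" .
  show "(fps_const s0 * R)$0 = s0" by (simp add: R_def)
qed

lemma deriv_facts:
  fixes P w :: "'a::field_char_0 fls"
  assumes P0: "P \<noteq> 0" and P1: "P \<noteq> 1" and DP: "w * fls_deriv P = P"
  shows "w * fls_deriv ((P+1)/(P-1)/2) = 1/4 - ((P+1)/(P-1)/2)^2"
    and "w * fls_deriv (P + inverse P - 2) = 2*(P + inverse P - 2)*((P+1)/(P-1)/2)"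
    and "(P + inverse P - 2)*(1/4 - ((P+1)/(P-1)/2)^2) = -1"
proof -
  have P1': "P - 1 \<noteq> 0" using P1 by simp
  define u where "u = inverse (P - 1)"
  define v where "v = inverse P"
  define h where "h = inverse (2::'a fls)"
  have r: "P*v = 1" "(P-1)*u = 1" "2*h = 1" using P0 P1' by (auto simp: u_def v_def h_def)
  have e: "(P+1)/(P-1)/2 = (P+1) * u * h" by (simp add: field_simps u_def h_def)
  have d1: "fls_deriv h = 0" using fls_inverse_deriv[of "2::'a fls"] by (simp add: h_def)
  have d2: "fls_deriv u = - fls_deriv P * u^2" by (simp add: fls_inverse_deriv u_def)
  have d3: "fls_deriv v = - fls_deriv P * v^2" by (simp add: fls_inverse_deriv v_def)
  have "w * fls_deriv ((P+1)/(P-1)/2) = (w * fls_deriv P) * (u - (P+1) * u^2) * h"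
    unfolding e by (simp add: d1 d2 algebra_simps)
  also have "\<dots> = 1/4 - ((P+1)/(P-1)/2)^2"
    unfolding DP e using r by algebra
  finally show "w * fls_deriv ((P+1)/(P-1)/2) = 1/4 - ((P+1)/(P-1)/2)^2" .
  have "w * fls_deriv (P + inverse P - 2) = (w * fls_deriv P) * (1 - v^2)"
    unfolding v_def[symmetric] by (simp add: d3 algebra_simps)
  also have "\<dots> = 2*(P + inverse P - 2)*((P+1)/(P-1)/2)"
    unfolding DP e v_def[symmetric] using r by algebra
  finally show "w * fls_deriv (P + inverse P - 2) = 2*(P + inverse P - 2)*((P+1)/(P-1)/2)" .
  show "(P + inverse P - 2)*(1/4 - ((P+1)/(P-1)/2)^2) = -1"
    unfolding e v_def[symmetric] using r by algebra
qed

lemma deriv_recur: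
  fixes s t w :: "'a::field_char_0 fls"
  assumes Ds: "w * fls_deriv s = 1/4 - s^2" and Dt: "w * fls_deriv t = 2*t*s"
      and tt: "t*(1/4 - s^2) = -1"
  shows "w * fls_deriv (t^Suc i * s^m) = 2*of_nat(Suc i) * t^Suc i * s^(m+1) - of_nat m * t^i * s^(m-1)"
    and "w * fls_deriv (s^Suc m) = of_nat (Suc m) * s^m * (1/4 - s^2)"
proof -
  have a: "fls_deriv (t^Suc i) = of_nat (Suc i) * t^i * fls_deriv t" using fls_deriv_power[of t "Suc i"] by simp
  have b: "fls_deriv (s^m) = of_nat m * s^(m-1) * fls_deriv s" by (rule fls_deriv_power)
  have "w * fls_deriv (t^Suc i * s^m) =
        of_nat m * s^(m-1) * t^i * (t * (w * fls_deriv s)) + of_nat (Suc i) * t^i * s^m * (w * fls_deriv t)"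
    unfolding fls_deriv_mult a b by (simp only: power_Suc algebra_simps)
  also have "\<dots> = of_nat m * s^(m-1) * t^i * (-1) + 2 * of_nat (Suc i) * (t * t^i) * (s * s^m)"
    unfolding Ds Dt tt by (simp add: algebra_simps)
  also have "\<dots> = 2*of_nat(Suc i) * t^Suc i * s^(m+1) - of_nat m * t^i * s^(m-1)"
    by (simp add: algebra_simps)
  finally show "w * fls_deriv (t^Suc i * s^m) = 2*of_nat(Suc i) * t^Suc i * s^(m+1) - of_nat m * t^i * s^(m-1)" .
  have "w * fls_deriv (s^Suc m) = of_nat (Suc m) * s^m * (w * fls_deriv s)"
    using fls_deriv_power[of s "Suc m"] by (simp add: mult_ac del: of_nat_Suc power_Suc)
  then show "w * fls_deriv (s^Suc m) = of_nat (Suc m) * s^m * (1/4 - s^2)" unfolding Ds .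
qed

lemma lam_rel:
  fixes s t w :: "rat fls" and c :: int
  assumes Ds: "w * fls_deriv s = 1/4 - s^2" and Dt: "w * fls_deriv t = 2*t*s"
      and tt: "t*(1/4 - s^2) = -1" and L: "\<And>f. fls_nth (w * fls_deriv f) c = 0"
  shows "2 * of_nat (Suc i) * fls_nth (t^Suc i * s^(m+1)) c = of_nat m * fls_nth (t^i * s^(m-1)) c"
    and "fls_nth (s^(m+2)) c = fls_nth (s^m) c / 4"
proof -
  have "0 = fls_nth (w * fls_deriv (t^Suc i * s^m)) c" by (rule sym, rule L)
  also have "\<dots> = fls_nth (2*of_nat(Suc i) * t^Suc i * s^(m+1) - of_nat m * t^i * s^(m-1)) c"
    using deriv_recur(1)[OF Ds Dt tt] by simp
  also have "\<dots> = 2 * of_nat (Suc i) * fls_nth (t^Suc i * s^(m+1)) c - of_nat m * fls_nth (t^i * s^(m-1)) c"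
    by (simp add: mult.assoc del: of_nat_Suc)
  finally show "2 * of_nat (Suc i) * fls_nth (t^Suc i * s^(m+1)) c = of_nat m * fls_nth (t^i * s^(m-1)) c"
    by simp
  have "0 = fls_nth (w * fls_deriv (s^Suc m)) c" by (rule sym, rule L)
  also have "\<dots> = fls_nth (of_nat (Suc m) * s^m * (1/4 - s^2)) c"
    using deriv_recur(2)[OF Ds Dt tt] by simp
  also have "\<dots> = of_nat (Suc m) * fls_nth (s^m * (1/4 - s^2)) c"
    by (simp add: mult.assoc del: of_nat_Suc)
  finally have "fls_nth (s^m * (1/4 - s^2)) c = 0" by (simp del: of_nat_Suc)
  hence "fls_nth (4 * (s^m * (1/4 - s^2))) c = 0" by (simp only: fls_mult_of_numeral_nth)
  moreover have "4 * (s^m * (1/4 - s^2)) = s^m - 4 * s^(m+2)" by (simp add: algebra_simps power_add power2_eq_square)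
  ultimately have "fls_nth (s^m) c - 4 * fls_nth (s^(m+2)) c = 0" by (simp only: fls_minus_nth fls_mult_of_numeral_nth)
  thus "fls_nth (s^(m+2)) c = fls_nth (s^m) c / 4" by simp
qed

lemma compare_odd:
  fixes sx tx wx sz tz wz :: "rat fls"
  assumes Dsx: "wx * fls_deriv sx = 1/4 - sx^2" and Dtx: "wx * fls_deriv tx = 2*tx*sx"
      and ttx: "tx*(1/4 - sx^2) = -1" and Lx: "\<And>f. fls_nth (wx * fls_deriv f) 0 = 0"
      and bx: "2 * fls_nth sx 0 = 1"
  assumes Dsz: "wz * fls_deriv sz = 1/4 - sz^2" and Dtz: "wz * fls_deriv tz = 2*tz*sz"
      and ttz: "tz*(1/4 - sz^2) = -1" and Lz: "\<And>f. fls_nth (wz * fls_deriv f) (-1) = 0"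
      and bz: "fls_nth sz (-1) = 1"
  shows "2 * fls_nth (tx^i * sx^(2*l+1)) 0 = fls_nth (tz^i * sz^(2*l+1)) (-1)"
proof (induction l arbitrary: i)
  case 0
  show ?case
  proof (cases i)
    case 0 thus ?thesis using bx bz by simp
  next
    case (Suc j)
    have "2 * of_nat (Suc j) * fls_nth (tx^Suc j * sx^(0+1)) 0 = of_nat 0 * fls_nth (tx^j * sx^(0-1)) 0"
      by (rule lam_rel(1)[OF Dsx Dtx ttx Lx])
    moreover have "2 * of_nat (Suc j) * fls_nth (tz^Suc j * sz^(0+1)) (-1) = of_nat 0 * fls_nth (tz^j * sz^(0-1)) (-1)"
      by (rule lam_rel(1)[OF Dsz Dtz ttz Lz])
    ultimately show ?thesis using Suc by (simp del: of_nat_Suc)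
  qed
next
  case (Suc l)
  show ?case
  proof (cases i)
    case 0
    have "fls_nth (sx^(2*l+1+2)) 0 = fls_nth (sx^(2*l+1)) 0 / 4" by (rule lam_rel(2)[OF Dsx Dtx ttx Lx])
    moreover have "fls_nth (sz^(2*l+1+2)) (-1) = fls_nth (sz^(2*l+1)) (-1) / 4" by (rule lam_rel(2)[OF Dsz Dtz ttz Lz])
    moreover have "2 * fls_nth (sx^(2*l+1)) 0 = fls_nth (sz^(2*l+1)) (-1)" using Suc.IH[of 0] by simp
    ultimately show ?thesis using 0 by (simp add: algebra_simps)
  next
    case (Suc j)
    have "2 * of_nat (Suc j) * fls_nth (tx^Suc j * sx^((2*l+2)+1)) 0 = of_nat (2*l+2) * fls_nth (tx^j * sx^((2*l+2)-1)) 0"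
      by (rule lam_rel(1)[OF Dsx Dtx ttx Lx])
    moreover have "2 * of_nat (Suc j) * fls_nth (tz^Suc j * sz^((2*l+2)+1)) (-1) = of_nat (2*l+2) * fls_nth (tz^j * sz^((2*l+2)-1)) (-1)"
      by (rule lam_rel(1)[OF Dsz Dtz ttz Lz])
    moreover have "2 * fls_nth (tx^j * sx^(2*l+1)) 0 = fls_nth (tz^j * sz^(2*l+1)) (-1)" by (rule Suc.IH)
    ultimately have "2 * of_nat (Suc j) * (2 * fls_nth (tx^Suc j * sx^(2*Suc l+1)) 0) = 2 * of_nat (Suc j) * fls_nth (tz^Suc j * sz^(2*Suc l+1)) (-1)"
      by (simp add: algebra_simps del: of_nat_Suc)
    thus ?thesis using Suc by (simp del: of_nat_Suc)
  qed
qed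

lemma fls_const_sum: "fls_const (\<Sum>i\<in>A. f i) = (\<Sum>i\<in>A. fls_const (f i))"
  by (induction A rule: infinite_finite_induct) (simp_all add: fls_plus_const[symmetric])

definition evp :: "rat fls \<Rightarrow> rat poly \<Rightarrow> rat fls" where
  "evp t P = poly (map_poly fls_const P) t"

lemma mpc_add: "map_poly fls_const (P + Q) = map_poly fls_const P + map_poly (fls_const :: rat \<Rightarrow> rat fls) Q"
  by (rule poly_eqI) (simp add: coeff_map_poly fls_plus_const)

lemma mpc_mult: "map_poly fls_const (P * Q) = map_poly fls_const P * map_poly (fls_const :: rat \<Rightarrow> rat fls) Q"
  by (rule poly_eqI) (simp add: coeff_map_poly coeff_mult fls_const_sum)

lemma mpc_minus: "map_poly fls_const (- P) = - map_poly (fls_const :: rat \<Rightarrow> rat fls) P"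
  by (rule poly_eqI) (simp add: coeff_map_poly)

lemma evp_add [simp]: "evp t (P + Q) = evp t P + evp t Q"
  by (simp add: evp_def mpc_add)
lemma evp_mult [simp]: "evp t (P * Q) = evp t P * evp t Q"
  by (simp add: evp_def mpc_mult)
lemma evp_minus [simp]: "evp t (- P) = - evp t P"
  by (simp add: evp_def mpc_minus)
lemma evp_diff [simp]: "evp t (P - Q) = evp t P - evp t Q"
  using evp_add[of t P "-Q"] by simp
lemma evp_const [simp]: "evp t [:c:] = fls_const c"
  by (simp add: evp_def map_poly_pCons)
lemma evp_0 [simp]: "evp t 0 = 0"
  by (simp add: evp_def)
lemma evp_1 [simp]: "evp t 1 = 1"
  by (simp add: evp_def)
lemma evp_X: "evp t [:0,1:] = t"
  by (simp add: evp_def map_poly_pCons)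
lemma evp_sum: "evp t (\<Sum>i\<in>A. f i) = (\<Sum>i\<in>A. evp t (f i))"
  by (induction A rule: infinite_finite_induct) simp_all
lemma evp_smult: "evp t (smult c P) = fls_const c * evp t P"
  using evp_mult[of t "[:c:]" P] by simp
lemma evp_power: "evp t (P ^ n) = evp t P ^ n"
  by (induction n) simp_all

definition evq :: "rat fls \<Rightarrow> rat poly fps \<Rightarrow> rat fls fps" where
  "evq t F = Abs_fps (\<lambda>n. evp t (F $ n))"

lemma evq_nth [simp]: "evq t F $ n = evp t (F $ n)"
  by (simp add: evq_def)

lemma evq_mult: "evq t (A * B) = evq t A * evq t B"
  by (rule fps_ext) (simp add: fps_mult_nth evp_sum)

lemma evq_one: "evq t 1 = 1"
  by (rule fps_ext) simp

lemma evq_power: "evq t (F ^ n) = evq t F ^ n"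
  by (induction n) (simp_all add: evq_one evq_mult)

lemma lin_compare:
  assumes "\<And>i. 2 * fls_nth (tx^i * sx^m) 0 = fls_nth (tz^i * sz^m) (-1)"
  shows "2 * fls_nth (evp tx P * sx^m) 0 = fls_nth (evp tz P * sz^m) (-1)"
proof -
  define D where "D = degree (map_poly (fls_const :: rat \<Rightarrow> rat fls) P)"
  have ev: "evp t P = (\<Sum>i\<le>D. fls_const (coeff P i) * t^i)" for t
    unfolding evp_def poly_altdef D_def by (simp add: coeff_map_poly)
  have "2 * fls_nth (evp tx P * sx^m) 0 = (\<Sum>i\<le>D. coeff P i * (2 * fls_nth (tx^i * sx^m) 0))"
    unfolding ev sum_distrib_right fls_nth_sum sum_distrib_left
    by (intro sum.cong refl) (simp add: mult.assoc)
  also have "\<dots> = (\<Sum>i\<le>D. coeff P i * fls_nth (tz^i * sz^m) (-1))"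
    using assms by simp
  also have "\<dots> = fls_nth (evp tz P * sz^m) (-1)"
    unfolding ev sum_distrib_right fls_nth_sum
    by (intro sum.cong refl) (simp add: mult.assoc)
  finally show ?thesis .
qed

definition tr :: "rat fps fls \<Rightarrow> rat fls fps" where
  "tr f = Abs_fps (\<lambda>n. fls_shift (- fls_subdegree f)
            (fps_to_fls (Abs_fps (\<lambda>i. fls_nth f (int i + fls_subdegree f) $ n))))"

lemma tr_nth [simp]: "fls_nth (tr f $ n) m = fls_nth f m $ n"
  by (cases "m < fls_subdegree f") (simp_all add: tr_def)

lemma tr_inj: "tr f = tr g \<Longrightarrow> f = g"
proof (rule fls_eqI)
  fix m assume "tr f = tr g"
  hence "fls_nth (tr f $ n) m = fls_nth (tr g $ n) m" for n by simp
  thus "fls_nth f m = fls_nth g m" by (intro fps_ext) simp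
qed

lemma fls_times_nth_lb:
  fixes f g :: "'a::comm_ring_1 fls"
  assumes a: "\<And>i. i < a \<Longrightarrow> fls_nth f i = 0" and b: "\<And>i. i < b \<Longrightarrow> fls_nth g i = 0"
  shows "fls_nth (f*g) n = (\<Sum>i=a..n-b. fls_nth f i * fls_nth g (n-i))"
proof (cases "f = 0 \<or> g = 0")
  case True thus ?thesis by auto
next
  case False
  hence f0: "f \<noteq> 0" and g0: "g \<noteq> 0" by auto
  have "fls_nth f (fls_subdegree f) \<noteq> 0" using f0 by simp
  hence da: "a \<le> fls_subdegree f" using a by (meson not_le)
  have "fls_nth g (fls_subdegree g) \<noteq> 0" using g0 by simp
  hence db: "b \<le> fls_subdegree g" using b by (meson not_le)
  have "fls_nth (f*g) n = (\<Sum>i=fls_subdegree f..n - fls_subdegree g. fls_nth f i * fls_nth g (n - i))"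
    by (rule fls_times_nth(2))
  also have "\<dots> = (\<Sum>i=a..n-b. fls_nth f i * fls_nth g (n-i))"
  proof (rule sum.mono_neutral_left)
    show "{fls_subdegree f..n - fls_subdegree g} \<subseteq> {a..n - b}" using da db by auto
    show "\<forall>i\<in>{a..n - b} - {fls_subdegree f..n - fls_subdegree g}. fls_nth f i * fls_nth g (n - i) = 0"
    proof
      fix i assume "i \<in> {a..n - b} - {fls_subdegree f..n - fls_subdegree g}"
      hence "i < fls_subdegree f \<or> n - i < fls_subdegree g" by auto
      thus "fls_nth f i * fls_nth g (n - i) = 0" by auto
    qed
  qed simp
  finally show ?thesis .
qed

lemma tr_mult: "tr (f * g) = tr f * tr g"
proof (rule fps_ext, rule fls_eqI)
  fix n m
  define a where "a = fls_subdegree f"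
  define b where "b = fls_subdegree g"
  have fa: "\<And>i. i < a \<Longrightarrow> fls_nth f i = 0" by (simp add: a_def)
  have gb: "\<And>i. i < b \<Longrightarrow> fls_nth g i = 0" by (simp add: b_def)
  have "fls_nth (tr (f * g) $ n) m = (\<Sum>i=a..m-b. fls_nth f i * fls_nth g (m-i)) $ n"
    using fls_times_nth_lb[OF fa gb] by simp
  also have "\<dots> = (\<Sum>i=a..m-b. \<Sum>j=0..n. fls_nth f i $ j * fls_nth g (m-i) $ (n-j))"
    by (simp add: fps_sum_nth fps_mult_nth)
  also have "\<dots> = (\<Sum>j=0..n. \<Sum>i=a..m-b. fls_nth f i $ j * fls_nth g (m-i) $ (n-j))"
    by (rule sum.swap)
  also have "\<dots> = (\<Sum>j=0..n. fls_nth (tr f $ j * tr g $ (n-j)) m)"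
  proof (rule sum.cong[OF refl])
    fix j
    have "fls_nth (tr f $ j * tr g $ (n-j)) m = (\<Sum>i=a..m-b. fls_nth (tr f $ j) i * fls_nth (tr g $ (n-j)) (m-i))"
      by (rule fls_times_nth_lb) (simp_all add: fa gb)
    thus "(\<Sum>i=a..m-b. fls_nth f i $ j * fls_nth g (m-i) $ (n-j)) = fls_nth (tr f $ j * tr g $ (n-j)) m"
      by simp
  qed
  also have "\<dots> = fls_nth ((tr f * tr g) $ n) m"
    by (simp add: fps_mult_nth fls_nth_sum)
  finally show "fls_nth (tr (f * g) $ n) m = fls_nth ((tr f * tr g) $ n) m" .
qed

lemma tr_add: "tr (f + g) = tr f + tr g"
  by (rule fps_ext, rule fls_eqI) simp

lemma tr_diff: "tr (f - g) = tr f - tr g"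
  by (rule fps_ext, rule fls_eqI) simp

lemma tr_one: "tr 1 = 1"
  by (rule fps_ext, rule fls_eqI) simp

lemma tr_power: "tr (f ^ n) = tr f ^ n"
  by (induction n) (simp_all add: tr_one tr_mult)

definition untr :: "rat fls fps \<Rightarrow> rat fps fls" where
  "untr F = fls_shift 1 (fps_to_fls (Abs_fps (\<lambda>i. Abs_fps (\<lambda>n. fls_nth (F$n) (int i - 1)))))"

lemma untr_nth: "fls_nth (untr F) m $ n = (if m < -1 then 0 else fls_nth (F$n) m)"
  by (simp add: untr_def)

lemma tr_untr:
  assumes "\<And>n m. m < -1 \<Longrightarrow> fls_nth (F$n) m = 0"
  shows "tr (untr F) = F"
  by (rule fps_ext, rule fls_eqI) (simp add: untr_nth assms)

lemma b0: "bernoulli_num 0 = 1" by (simp add: bernoulli_num.simps)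
lemma b1: "bernoulli_num 1 = -1/2" by (subst bernoulli_num.simps) (simp add: b0)
lemma b1': "bernoulli_num (Suc 0) = -1/2" using b1 by simp
lemma b2: "bernoulli_num 2 = 1/6"
  by (subst bernoulli_num.simps) (simp add: b0 b1' numeral_2_eq_2 lessThan_Suc)

fun cheb :: "nat \<Rightarrow> rat poly" where
  "cheb 0 = [:2:]"
| "cheb (Suc 0) = [:2:] + [:0,1:]"
| "cheb (Suc (Suc k)) = ([:2:] + [:0,1:]) * cheb (Suc k) - cheb k"

lemma cheb_alg:
  fixes P v a b :: "'a::comm_ring_1"
  assumes "P * v = 1"
  shows "(2 + (P + v - 2)) * (P * a + v * b) - (a + b) = P * (P * a) + v * (v * b)"
proof -
  have "(2 + (P + v - 2)) * (P * a + v * b) = P*(P*a) + (P*v)*b + (P*v)*a + v*(v*b)"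
    by (simp add: algebra_simps)
  thus ?thesis using assms by simp
qed

lemma evp_cheb:
  fixes P :: "rat fls"
  assumes "P \<noteq> 0"
  shows "evp (P + inverse P - 2) (cheb k) = P^k + inverse P ^ k"
proof (induction k rule: cheb.induct)
  case 1 thus ?case by simp
next
  case 2 thus ?case by (simp only: cheb.simps evp_add evp_const evp_X) simp
next
  case (3 k)
  have r: "P * inverse P = 1" using assms by simp
  have "evp (P + inverse P - 2) (cheb (Suc (Suc k))) = (2 + (P + inverse P - 2)) * (P^Suc k + inverse P^Suc k) - (P^k + inverse P^k)"
    using 3 by (simp only: cheb.simps evp_add evp_const evp_X evp_mult evp_diff fls_const_numeral)
  also have "\<dots> = P^Suc (Suc k) + inverse P ^ Suc (Suc k)"
    unfolding power_Suc using r by (rule cheb_alg)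
  finally show ?case .
qed

definition Wq :: "rat poly fps" where
  "Wq = Abs_fps (\<lambda>d. if d = 0 then 0 else (\<Sum>k\<in>{k. k dvd d}. smult (of_nat k) (cheb k - [:6:])))"

definition sx :: "rat fls" where "sx = (pvar + 1) / (pvar - 1) / 2"
definition tx :: "rat fls" where "tx = pvar + inverse pvar - 2"

lemma pvar_ne0: "pvar \<noteq> 0" by (simp add: pvar_def)
lemma pvar_ne1: "pvar \<noteq> 1"
proof
  assume "pvar = 1"
  hence "fls_nth pvar 0 = fls_nth (1::rat fls) 0" by simp
  thus False by (simp add: pvar_def)
qed

lemma X_Xinv: "fls_X * fls_X_inv = (1 :: rat fls)"
  by (simp add: fls_X_times_conv_shift)

lemma Dpvar: "(- fls_X) * fls_deriv pvar = pvar"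
proof -
  have "(- fls_X) * fls_deriv pvar = (fls_X * fls_X_inv) * fls_X_inv"
    by (simp add: pvar_def power2_eq_square mult.assoc)
  thus ?thesis by (simp add: X_Xinv pvar_def)
qed

lemma Lx: "fls_nth ((- fls_X) * fls_deriv f) 0 = (0::rat)"
  by (simp add: fls_X_times_conv_shift)

definition sxg :: "rat fps" where "sxg = Abs_fps (\<lambda>n. if n = 0 then 1/2 else 1)"

lemma sx_eq: "sx = fps_to_fls sxg"
proof -
  have "2 * (fps_to_fls sxg * pvar - fps_to_fls sxg) = pvar + 1"
  proof (rule fls_eqI)
    fix n :: int
    show "fls_nth (2 * (fps_to_fls sxg * pvar - fps_to_fls sxg)) n = fls_nth (pvar + 1) n"
      by (cases "n < -1"; cases "n = -1"; cases "n = 0")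
         (auto simp: pvar_def fls_X_inv_times_conv_shift sxg_def nat_eq_iff)
  qed
  hence "fps_to_fls sxg * (pvar - 1) * 2 = pvar + 1" by (simp add: algebra_simps)
  moreover have "pvar - 1 \<noteq> 0" using pvar_ne1 by simp
  ultimately show ?thesis unfolding sx_def by (simp add: field_simps)
qed

lemma bx: "2 * fls_nth sx 0 = 1"
  by (simp add: sx_eq sxg_def)

lemma idx:
  fixes P u :: "'a::field_char_0"
  assumes r: "(P - 1) * u = 1"
  shows "1/12 + P * u^2 + 1/6 = ((P + 1) * u * (1/2))^2"
proof -
  have a: "((P+1)*u)^2 = ((P-1)*u)^2 + 4*(P*u^2)" by (simp add: power2_eq_square algebra_simps)
  have b: "((P + 1) * u * (1/2))^2 = ((P+1)*u)^2 / 4" by (simp add: power_mult_distrib power2_eq_square)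
  show ?thesis unfolding b a r by simp
qed

lemma G2_0: "G 2 $ 0 = -1/24"
  by (simp add: G_def b2)

lemma G2_n: "n > 0 \<Longrightarrow> G 2 $ n = (\<Sum>d\<in>{d. d dvd n}. of_nat d)"
  by (simp add: G_def)

lemma Wx_dec: "wp_pq - 4 * G2_pq = fps_const (sx^2) + evq tx Wq"
proof (rule fps_ext)
  fix n
  show "(wp_pq - 4 * G2_pq) $ n = (fps_const (sx^2) + evq tx Wq) $ n"
  proof (cases "n = 0")
    case True
    have c0: "fls_const (1/24::rat) = 1 / 24"
    proof -
      have "fls_const (1/24::rat) = fls_const 1 / fls_const 24" by (rule fls_const_divide_const[symmetric])
      also have "\<dots> = 1 / 24" by (simp only: fls_const_1 fls_const_numeral)
      finally show ?thesis .
    qed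
    have "(wp_pq - 4 * G2_pq) $ 0 = 1/12 + pvar / (1 - pvar)^2 + 1/6"
      by (simp add: wp_pq_def G2_pq_def numeral_fps_const G2_0 c0)
    also have "\<dots> = sx^2"
    proof -
      define u where "u = inverse (pvar - 1)"
      have r: "(pvar - 1) * u = 1" using pvar_ne1 by (simp add: u_def)
      have e1: "pvar / (1 - pvar)^2 = pvar * u^2"
        by (simp add: u_def power2_commute divide_inverse power_inverse)
      have e2: "sx = (pvar + 1) * u * (1/2)" unfolding sx_def u_def divide_inverse by simp
      show ?thesis unfolding e1 e2 using r by (rule idx)
    qed
    finally show ?thesis using True by (simp add: Wq_def)
  next
    case False
    have fin: "finite {k. k dvd n}" using False by simp
    have "(wp_pq - 4 * G2_pq) $ n =
       (\<Sum>k\<in>{k. k dvd n}. of_nat k * (pvar ^ k - 2 + inverse (pvar ^ k))) - 4 * fls_const (\<Sum>d\<in>{d. d dvd n}. of_nat d)"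
      using False by (simp add: wp_pq_def G2_pq_def numeral_fps_const G2_n)
    also have "\<dots> = (\<Sum>k\<in>{k. k dvd n}. fls_const (of_nat k) * (pvar ^ k + inverse pvar ^ k - fls_const 6))"
      unfolding fls_const_sum sum_distrib_left sum_subtractf[symmetric]
      by (intro sum.cong refl) (simp add: fls_of_nat power_inverse algebra_simps)
    also have "\<dots> = (fps_const (sx^2) + evq tx Wq) $ n"
      using False by (simp add: Wq_def evp_sum evp_smult tx_def evp_cheb pvar_ne0)
    finally show ?thesis .
  qed
qed

lemma bern_rec:
  assumes "m \<ge> 1"
  shows "(\<Sum>j\<le>m. of_nat ((m+1) choose j) * bernoulli_num j) = 0"
proof -
  have "bernoulli_num m = - (\<Sum>j<m. of_nat ((m + 1) choose j) * bernoulli_num j) / of_nat (m + 1)"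
    using assms by (subst bernoulli_num.simps) simp
  hence "of_nat (m+1) * bernoulli_num m = - (\<Sum>j<m. of_nat ((m + 1) choose j) * bernoulli_num j)"
    by (simp del: of_nat_Suc add: field_simps)
  moreover have "(m+1) choose m = m + 1" by (simp add: binomial_Suc_n)
  ultimately show ?thesis by (simp add: lessThan_Suc_atMost[symmetric] del: of_nat_Suc)
qed

definition Bf :: "rat fps" where "Bf = Abs_fps (\<lambda>n. bernoulli_num n / fact n)"

lemma bern_sum_fact:
  assumes "n \<ge> 1"
  shows "(\<Sum>j<n. bernoulli_num j / fact j * (1 / fact (n - j))) = (if n = 1 then 1 else 0)"
proof -
  have "(\<Sum>j<n. bernoulli_num j / fact j * (1 / fact (n - j))) =
        (\<Sum>j<n. of_nat (n choose j) * bernoulli_num j) / fact n"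
    unfolding sum_divide_distrib
    by (intro sum.cong refl) (simp add: binomial_fact field_simps)
  also have "\<dots> = (if n = 1 then 1 else 0)"
  proof (cases "n = 1")
    case True thus ?thesis by (simp add: b0)
  next
    case False
    then obtain m where m: "n = m + 1" "m \<ge> 1" using assms by (metis add.commute le_add_diff_inverse less_one linorder_neqE_nat not_le plus_1_eq_Suc Suc_leI)
    have "(\<Sum>j<n. of_nat (n choose j) * bernoulli_num j) = (\<Sum>j\<le>m. of_nat ((m+1) choose j) * bernoulli_num j)"
      using m(1) by (simp add: lessThan_Suc_atMost)
    thus ?thesis using bern_rec[OF m(2)] False by simp
  qed
  finally show ?thesis .
qed

lemma Bf_gf: "Bf * (fps_exp 1 - 1) = fps_X"
proof (rule fps_ext)
  fix n
  show "(Bf * (fps_exp 1 - 1)) $ n = fps_X $ n"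
  proof (cases "n = 0")
    case True thus ?thesis by simp
  next
    case False
    have "(Bf * (fps_exp 1 - 1)) $ n = (\<Sum>i=0..n. bernoulli_num i / fact i * (if n - i = 0 then 0 else 1 / fact (n - i)))"
      by (simp add: fps_mult_nth Bf_def, intro sum.cong refl, auto)
    also have "\<dots> = (\<Sum>i<n. bernoulli_num i / fact i * (1 / fact (n - i)))"
      by (rule sum.mono_neutral_cong_right) auto
    also have "\<dots> = fps_X $ n" using False bern_sum_fact[of n] by simp
    finally show ?thesis .
  qed
qed

definition Bm :: "rat fps" where "Bm = Abs_fps (\<lambda>n. (-1)^n * bernoulli_num n / fact n)"

lemma Bm_gf: "Bm * (fps_exp (-1) - 1) = - fps_X"
proof (rule fps_ext)
  fix n
  show "(Bm * (fps_exp (-1) - 1)) $ n = (- fps_X) $ n"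
  proof (cases "n = 0")
    case True thus ?thesis by simp
  next
    case False
    have "(Bm * (fps_exp (-1) - 1)) $ n = (\<Sum>i=0..n. (-1)^n * (bernoulli_num i / fact i * (if n - i = 0 then 0 else 1 / fact (n - i))))"
      unfolding fps_mult_nth
    proof (intro sum.cong refl)
      fix i assume i: "i \<in> {0..n}"
      have "(-1::rat)^i * (-1)^(n-i) = (-1)^n" using i by (simp flip: power_add)
      thus "Bm $ i * (fps_exp (-1) - 1) $ (n - i) = (-1)^n * (bernoulli_num i / fact i * (if n - i = 0 then 0 else 1 / fact (n - i)))"
        by (auto simp: Bm_def field_simps)
    qed
    also have "\<dots> = (-1)^n * (\<Sum>i<n. bernoulli_num i / fact i * (1 / fact (n - i)))"
      unfolding sum_distrib_left[symmetric]
      by (rule arg_cong[where f = "\<lambda>x. (-1)^n * x"], rule sum.mono_neutral_cong_right) auto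
    also have "\<dots> = (- fps_X) $ n" using False bern_sum_fact[of n] by simp
    finally show ?thesis .
  qed
qed

lemma Bm_Bf: "Bm - fps_X = Bf"
proof -
  define e where "e = fps_exp (1::rat)"
  define f where "f = fps_exp (-1::rat)"
  have ef: "e * f = 1" using fps_exp_add_mult[of "1::rat" "-1"] by (simp add: e_def f_def)
  have "Bm * (f - 1) * e = - fps_X * e" using Bm_gf by (simp add: f_def)
  hence "Bm * (e - 1) = fps_X * e" using ef by (simp add: algebra_simps)
  hence "(Bm - fps_X) * (e - 1) = Bf * (e - 1)" using Bf_gf by (simp add: algebra_simps e_def)
  moreover have "e - 1 \<noteq> 0"
  proof
    assume "e - 1 = 0"
    hence "(e - 1) $ 1 = 0" by simp
    thus False by (simp add: e_def)
  qed
  ultimately show ?thesis by simp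
qed

lemma bern_odd:
  assumes "odd n" "n \<ge> 3"
  shows "bernoulli_num n = 0"
proof -
  have "(Bm - fps_X) $ n = Bf $ n" using Bm_Bf by simp
  hence "(-1)^n * bernoulli_num n / fact n = bernoulli_num n / fact n"
    using assms by (simp add: Bm_def Bf_def)
  thus ?thesis using assms by simp
qed

definition Ez :: "rat fls" where "Ez = fps_to_fls (fps_exp 1)"
definition sz :: "rat fls" where "sz = (Ez + 1) / (Ez - 1) / 2"
definition tz :: "rat fls" where "tz = Ez + inverse Ez - 2"
definition yz :: "rat fls" where "yz = fls_X_inv * fps_to_fls Bf"

lemma Ez_ne1: "Ez \<noteq> 1"
proof
  assume "Ez = 1"
  hence "fls_nth Ez 1 = fls_nth (1::rat fls) 1" by simp
  thus False by (simp add: Ez_def)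
qed

lemma Ez_ne0: "Ez \<noteq> 0"
proof
  assume "Ez = 0"
  hence "fls_nth Ez 0 = fls_nth (0::rat fls) 0" by simp
  thus False by (simp add: Ez_def)
qed

lemma DEz: "1 * fls_deriv Ez = Ez"
  by (simp add: Ez_def fls_deriv_fps_to_fls)

lemma Lz: "fls_nth (1 * fls_deriv f) (-1) = (0::rat)"
  by simp

lemma inv_Ez: "inverse Ez = fps_to_fls (fps_exp (-1))"
proof -
  have "Ez * fps_to_fls (fps_exp (-1)) = 1"
    using fps_exp_add_mult[of "1::rat" "-1"] by (simp add: Ez_def fls_times_fps_to_fls[symmetric])
  thus ?thesis by (metis inverse_unique)
qed

lemma Ez_pow: "Ez ^ k = fps_to_fls (fps_exp (of_nat k))"
  unfolding Ez_def fps_to_fls_power[symmetric] fps_exp_power_mult by simp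

lemma inv_Ez_pow: "inverse Ez ^ k = fps_to_fls (fps_exp (- of_nat k))"
  unfolding inv_Ez fps_to_fls_power[symmetric] fps_exp_power_mult by simp

lemma X_Xinv': "fls_X * fls_X_inv = (1 :: rat fls)"
  by (simp add: fls_X_times_conv_shift)

lemma inv_Em1: "inverse (Ez - 1) = yz"
proof -
  have "fps_to_fls ((fps_exp 1 - 1) * Bf) = fls_X" using Bf_gf by (simp add: mult.commute)
  hence "(Ez - 1) * fps_to_fls Bf = fls_X" by (simp add: Ez_def fls_times_fps_to_fls)
  hence "(Ez - 1) * yz = 1" unfolding yz_def
    by (metis X_Xinv' mult.left_commute mult.commute)
  thus ?thesis by (metis inverse_unique)
qed

lemma half_const: "(1/2 :: rat fls) = fls_const (1/2)"
proof -
  have "fls_const (1/2::rat) = fls_const 1 / fls_const 2" by (rule fls_const_divide_const[symmetric])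
  also have "\<dots> = 1 / 2" by (simp only: fls_const_1 fls_const_numeral)
  finally show ?thesis by simp
qed

lemma sz_eq: "sz = 1/2 + yz"
proof -
  define u where "u = inverse (Ez - 1)"
  have r: "(Ez - 1) * u = 1" using Ez_ne1 by (simp add: u_def)
  have u: "u = yz" by (simp add: u_def inv_Em1)
  have "sz = (Ez + 1) * u * inverse 2" unfolding sz_def u_def divide_inverse by simp
  also have "\<dots> = ((Ez - 1) * u + 2 * u) * inverse 2" by (simp add: algebra_simps)
  also have "\<dots> = inverse 2 + u" unfolding r by (simp add: algebra_simps)
  finally show ?thesis by (simp only: u inverse_eq_divide)
qed

lemma yz_nth: "fls_nth yz m = (if m < -1 then 0 else bernoulli_num (nat (m+1)) / fact (nat (m+1)))"
  by (simp add: yz_def fls_X_inv_times_conv_shift Bf_def)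

lemma sz_nth: "fls_nth sz m = (if m = 0 then 1/2 else 0) + fls_nth yz m"
  by (simp only: sz_eq half_const fls_plus_nth fls_const_nth)

lemma bz: "fls_nth sz (-1) = 1"
  by (simp add: sz_nth yz_nth b0)

lemma sz_0: "fls_nth sz 0 = 0"
  by (simp add: sz_nth yz_nth b1')

lemma sz_sq: "sz^2 = 1/4 - fls_deriv yz"
proof -
  have d: "fls_deriv yz = - Ez * yz^2"
    unfolding inv_Em1[symmetric] by (simp add: fls_inverse_deriv Ez_def fls_deriv_fps_to_fls)
  have "Ez * yz^2 = ((Ez - 1) * yz) * yz + yz^2" by (simp add: algebra_simps power2_eq_square)
  also have "(Ez - 1) * yz = 1" using Ez_ne1 by (simp add: inv_Em1[symmetric])
  finally have "Ez * yz^2 = yz + yz^2" by simp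
  thus ?thesis unfolding sz_eq d by (simp add: power2_eq_square algebra_simps)
qed

lemma quarter_const: "(1/4 :: rat fls) = fls_const (1/4)"
proof -
  have "fls_const (1/4::rat) = fls_const 1 / fls_const 4" by (rule fls_const_divide_const[symmetric])
  also have "\<dots> = 1 / 4" by (simp only: fls_const_1 fls_const_numeral)
  finally show ?thesis by simp
qed

lemma sz_sq_nth: "fls_nth (sz^2) m = (if m = 0 then 1/4 else 0) - of_int (m+1) * fls_nth yz (m+1)"
  by (simp only: sz_sq quarter_const fls_minus_nth fls_const_nth fls_deriv_nth)

definition Wz :: "rat fps fls" where "Wz = wp_z - 4 * fls_const (G 2)"

lemma wpz_nth: "fls_nth wp_z m $ n = (if m = -2 \<and> n = 0 then 1 else 0) + (if m \<ge> 2 then 2 / fact (nat m) * G (nat m + 2) $ n else 0)"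
  by (auto simp: wp_z_def nat_le_iff)

lemma Wz_nth: "fls_nth Wz m $ n = fls_nth wp_z m $ n - (if m = 0 then 4 * G 2 $ n else 0)"
  by (simp add: Wz_def numeral_fps_const)

lemma evp_Wq_z:
  assumes "n > 0"
  shows "fls_nth (evp tz (Wq $ n)) m = (\<Sum>k\<in>{k. k dvd n}. of_nat k * ((if m < 0 then 0 else
            (of_nat k)^(nat m)/fact (nat m) + (-of_nat k)^(nat m)/fact (nat m)) - (if m = 0 then 6 else 0)))"
proof -
  have "evp tz (Wq $ n) = (\<Sum>k\<in>{k. k dvd n}. fls_const (of_nat k) * (Ez^k + inverse Ez^k - fls_const 6))"
    using assms by (simp add: Wq_def evp_sum evp_smult tz_def evp_cheb Ez_ne0)
  hence "fls_nth (evp tz (Wq $ n)) m = (\<Sum>k\<in>{k. k dvd n}. fls_nth (fls_const (of_nat k) * (Ez^k + inverse Ez^k - fls_const 6)) m)"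
    by (simp only: fls_nth_sum)
  also have "\<dots> = (\<Sum>k\<in>{k. k dvd n}. of_nat k * ((if m < 0 then 0 else
            (of_nat k)^(nat m)/fact (nat m) + (-of_nat k)^(nat m)/fact (nat m)) - (if m = 0 then 6 else 0)))"
  proof (intro sum.cong refl)
    fix k
    show "fls_nth (fls_const (of_nat k) * (Ez^k + inverse Ez^k - fls_const 6)) m = of_nat k * ((if m < 0 then 0 else
            (of_nat k)^(nat m)/fact (nat m) + (-of_nat k)^(nat m)/fact (nat m)) - (if m = 0 then 6 else 0))"
      unfolding Ez_pow inv_Ez_pow fls_mult_const_nth fls_minus_nth fls_plus_nth fps_to_fls_nth fps_exp_nth fls_const_nth
      by simp
  qed
  finally show ?thesis .
qed

lemma G_nth: "G k $ n = (if even k \<and> k \<ge> 2 then (if n = 0 then - bernoulli_num k / (2 * of_nat k)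
                  else (\<Sum>d\<in>{d. d dvd n}. of_nat d ^ (k - 1))) else 0)"
  by (simp add: G_def)

lemma helper0_alg:
  fixes a b F B :: rat
  assumes "a \<noteq> 0" "b \<noteq> 0" "F \<noteq> 0"
  shows "2 / F * (- B / (2 * b)) = - a * (B / (b * a * F))"
  using assms by (simp add: field_simps)

lemma helper0:
  assumes "j \<ge> 1"
  shows "2 / fact j * G (j+2) $ 0 = - of_nat (j+1) * (bernoulli_num (j+2) / fact (j+2))"
proof (cases "even j")
  case True
  have f: "(fact (j+2) :: rat) = of_nat (j+2) * of_nat (j+1) * fact j"
    by (simp add: fact_Suc algebra_simps)
  have g: "G (j+2) $ 0 = - bernoulli_num (j+2) / (2 * of_nat (j+2))" using True by (simp add: G_nth)
  show ?thesis unfolding g f by (rule helper0_alg) auto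
next
  case False
  hence "bernoulli_num (j+2) = 0" using assms by (intro bern_odd) auto
  thus ?thesis using False by (simp add: G_nth)
qed

lemma helper1:
  assumes "j \<ge> 1" "n > 0"
  shows "2 / fact j * G (j+2) $ n = (\<Sum>k\<in>{k. k dvd n}. of_nat k * ((of_nat k)^j/fact j + (-of_nat k)^j/fact j))"
proof (cases "even j")
  case True
  have "2 / fact j * G (j+2) $ n = (\<Sum>k\<in>{k. k dvd n}. 2 / fact j * of_nat k ^ (j + 1))"
    using True assms by (simp add: G_nth sum_distrib_left)
  also have "\<dots> = (\<Sum>k\<in>{k. k dvd n}. of_nat k * ((of_nat k)^j/fact j + (-of_nat k)^j/fact j))"
    using True by (intro sum.cong refl) (simp add: field_simps)
  finally show ?thesis .
next
  case False
  thus ?thesis by (simp add: G_nth)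
qed

lemma trW: "tr Wz = fps_const (sz^2) + evq tz Wq"
proof (rule fps_ext, rule fls_eqI)
  fix n m
  show "fls_nth (tr Wz $ n) m = fls_nth ((fps_const (sz^2) + evq tz Wq) $ n) m"
  proof (cases "n = 0")
    case True
    have L: "fls_nth (tr Wz $ n) m = (if m = -2 then 1 else 0) + (if m \<ge> 2 then 2/fact (nat m) * G (nat m + 2) $ 0 else 0)
               - (if m = 0 then 4 * (-1/24) else 0)"
      using True by (simp add: Wz_nth wpz_nth G2_0)
    have R: "fls_nth ((fps_const (sz^2) + evq tz Wq) $ n) m = (if m = 0 then 1/4 else 0) - of_int (m+1) * fls_nth yz (m+1)"
      using True by (simp add: Wq_def sz_sq_nth)
    consider "m < -2" | "m = -2" | "m = -1" | "m = 0" | "m \<ge> 1" by linarith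
    thus ?thesis
    proof cases
      case 1 thus ?thesis unfolding L R by (simp add: yz_nth)
    next
      case 2 thus ?thesis unfolding L R by (simp add: yz_nth b0)
    next
      case 3 thus ?thesis unfolding L R by (simp add: yz_nth)
    next
      case 4 thus ?thesis unfolding L R by (simp add: yz_nth b2)
    next
      case 5
      define j where "j = nat m"
      have j: "j \<ge> 1" "m = int j" using 5 by (auto simp: j_def)
      have h: "nat (int j + 1 + 1) = j + 2" "nat (2 + int j) = j + 2" by simp_all
      have "fls_nth (tr Wz $ n) m = - of_nat (j+1) * (bernoulli_num (j+2) / fact (j+2))"
      proof (cases "j = 1")
        case True
        have "bernoulli_num (Suc (Suc (Suc 0))) = 0" using bern_odd[of 3] by (simp add: numeral_3_eq_3)
        thus ?thesis unfolding L using True j by simp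
      next
        case False
        thus ?thesis unfolding L using j helper0[of j] by simp
      qed
      also have "\<dots> = fls_nth ((fps_const (sz^2) + evq tz Wq) $ n) m"
        unfolding R yz_nth using j by (simp only: h, simp add: minus_divide_left algebra_simps)
      finally show ?thesis .
    qed
  next
    case False
    hence n: "n > 0" by simp
    have L: "fls_nth (tr Wz $ n) m = (if m \<ge> 2 then 2/fact (nat m) * G (nat m + 2) $ n else 0)
               - (if m = 0 then 4 * (\<Sum>d\<in>{d. d dvd n}. of_nat d) else 0)"
      using n by (simp add: Wz_nth wpz_nth G2_n)
    have R: "fls_nth ((fps_const (sz^2) + evq tz Wq) $ n) m = (\<Sum>k\<in>{k. k dvd n}. of_nat k * ((if m < 0 then 0 else
            (of_nat k)^(nat m)/fact (nat m) + (-of_nat k)^(nat m)/fact (nat m)) - (if m = 0 then 6 else 0)))"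
      using n by (simp add: evp_Wq_z)
    consider "m < 0" | "m = 0" | "m = 1" | "m \<ge> 2" by linarith
    thus ?thesis
    proof cases
      case 1 thus ?thesis unfolding L R by simp
    next
      case 2 thus ?thesis unfolding L R by (simp add: sum_distrib_left sum_negf algebra_simps)
    next
      case 3 thus ?thesis unfolding L R by simp
    next
      case 4
      define j where "j = nat m"
      have j: "j \<ge> 1" "m = int j" using 4 by (auto simp: j_def)
      show ?thesis unfolding L R using j 4 helper1[OF j(1) n] by simp
    qed
  qed
qed

definition og :: "int \<Rightarrow> rat fls \<Rightarrow> bool" where "og a f \<longleftrightarrow> (\<forall>i<a. fls_nth f i = 0)"

lemma og_mult: "og a f \<Longrightarrow> og b g \<Longrightarrow> og (a + b) (f * g)"
  unfolding og_def
proof (intro allI impI)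
  fix i assume f: "\<forall>i<a. fls_nth f i = 0" and g: "\<forall>i<b. fls_nth g i = 0" and i: "i < a + b"
  have "fls_nth (f*g) i = (\<Sum>j=a..i-b. fls_nth f j * fls_nth g (i-j))"
    by (rule fls_times_nth_lb) (use f g in auto)
  also have "\<dots> = 0" using i by simp
  finally show "fls_nth (f*g) i = 0" .
qed

lemma og_mono: "b \<le> a \<Longrightarrow> og a f \<Longrightarrow> og b f"
  by (auto simp: og_def)

lemma og_add: "og a f \<Longrightarrow> og a g \<Longrightarrow> og a (f + g)"
  by (auto simp: og_def)

lemma og_diff: "og a f \<Longrightarrow> og a g \<Longrightarrow> og a (f - g)"
  by (auto simp: og_def)

lemma og_zero [simp]: "og a 0"
  by (auto simp: og_def)

lemma og_sum: "(\<And>x. x \<in> A \<Longrightarrow> og a (f x)) \<Longrightarrow> og a (\<Sum>x\<in>A. f x)"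
  by (induction A rule: infinite_finite_induct) (auto intro: og_add)

lemma og_const: "og 0 (fls_const c)"
  by (auto simp: og_def)

lemma og_fps: "og 0 (fps_to_fls f)"
  by (auto simp: og_def)

lemma og_one: "og 0 1"
  by (auto simp: og_def)

lemma og_power: "og 0 f \<Longrightarrow> og 0 (f ^ n)"
  by (induction n) (auto simp: og_one dest: og_mult)

lemma og_evp: "og 0 t \<Longrightarrow> og 0 (evp t P)"
  unfolding evp_def poly_altdef
  by (intro og_sum) (simp add: coeff_map_poly og_const og_power og_mult[where a=0 and b=0, simplified])

lemma og_tz: "og 0 tz"
proof -
  have e: "tz = fps_to_fls (fps_exp 1) + fps_to_fls (fps_exp (-1)) - fls_const 2"
    by (simp add: tz_def Ez_def inv_Ez[unfolded Ez_def])
  show ?thesis unfolding e by (intro og_diff og_add og_fps og_const)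
qed

lemma sz_subdeg: "fls_subdegree sz = -1"
  by (rule fls_subdegree_eqI) (simp_all add: bz sz_nth yz_nth b0)

lemma sz_ne0: "sz \<noteq> 0"
  using bz by auto

lemma og_inv_sz2: "og 2 (inverse (sz^2))"
proof -
  have "fls_subdegree (inverse (sz^2)) = 2"
    using sz_ne0 sz_subdeg by (simp add: power2_eq_square)
  thus ?thesis by (auto simp: og_def)
qed

lemma og_sz: "og (-1) sz"
  by (auto simp: og_def sz_nth yz_nth)

lemma fls_const_prod: "fls_const (\<Prod>i\<in>A. f i) = (\<Prod>i\<in>A. fls_const (f i) :: rat fls)"
  by (induction A rule: infinite_finite_induct) (simp_all add: fls_const_mult_const[symmetric] del: fls_const_mult_const)

lemma gchoose_const: "(fls_const a :: rat fls) gchoose n = fls_const (a gchoose n)"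
proof -
  have f: "(fact n :: rat fls) = fls_const (fact n)" by (metis fls_of_nat of_nat_fact)
  have p: "fls_const a - of_nat i = fls_const (a - of_nat i)" for i
    by (rule fls_eqI) (simp add: fls_of_nat_nth)
  have "(fls_const a :: rat fls) gchoose n = (\<Prod>i=0..<n. fls_const (a - of_nat i)) / fls_const (fact n)"
    unfolding gbinomial_prod_rev p f by (rule refl)
  also have "\<dots> = fls_const ((\<Prod>i=0..<n. a - of_nat i) / fact n)"
    by (simp only: fls_const_prod[symmetric] fls_const_divide_const)
  also have "\<dots> = fls_const (a gchoose n)"
    by (simp only: gbinomial_prod_rev)
  finally show ?thesis .
qed

lemma og_pow_coeff:
  assumes A: "\<And>d. og 2 (A$d)"
  shows "og (if i = 0 \<and> n = 0 then 0 else 2) ((A^i)$n)"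
proof (induction i arbitrary: n)
  case 0 thus ?case by (auto simp: og_one)
next
  case (Suc i)
  have "(A^Suc i)$n = (\<Sum>j=0..n. A$j * (A^i)$(n-j))" by (simp add: fps_mult_nth)
  moreover have "og 2 (A$j * (A^i)$(n-j))" for j
    using og_mult[OF A[of j] Suc.IH[of "n-j"]] by (rule og_mono[rotated]) auto
  ultimately show ?case by (auto intro: og_sum)
qed

lemma og_compose_coeff:
  assumes A: "\<And>d. og 2 (A$d)"
  shows "og (if n = 0 then 0 else 2) ((fps_binomial (fls_const c) oo A) $ n)"
proof -
  have "(fps_binomial (fls_const c) oo A) $ n = (\<Sum>i=0..n. fls_const (c gchoose i) * (A^i)$n)"
    by (simp add: fps_compose_nth gchoose_const)
  moreover have "og (if n = 0 then 0 else 2) (fls_const (c gchoose i) * (A^i)$n)" for i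
    using og_mult[OF og_const og_pow_coeff[OF A, of i n]] by (rule og_mono[rotated]) auto
  ultimately show ?thesis by (auto intro: og_sum simp: og_one)
qed

definition Uz :: "rat fls fps" where "Uz = evq tz Wq"
definition Yz :: "rat fls fps" where "Yz = fps_const (inverse (sz^2)) * Uz"
definition Sz :: "rat fls fps" where "Sz = fps_const sz * (fps_binomial (1/2) oo Yz)"

lemma Uz0: "Uz $ 0 = 0" by (simp add: Uz_def Wq_def)

lemma og_Yz: "og 2 (Yz $ d)"
  using og_mult[OF og_inv_sz2 og_evp[OF og_tz, of "Wq $ d"]] by (simp add: Yz_def Uz_def)

lemma og_Sz: "og (if n = 0 then -1 else 1) (Sz $ n)"
proof -
  have "og (if n = 0 then 0 else 2) ((fps_binomial (fls_const (1/2)) oo Yz) $ n)"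
    by (rule og_compose_coeff[OF og_Yz])
  hence "og (-1 + (if n = 0 then 0 else 2)) (sz * (fps_binomial (1/2) oo Yz) $ n)"
    unfolding half_const[symmetric] by (rule og_mult[OF og_sz])
  thus ?thesis by (cases "n = 0") (simp_all add: Sz_def og_sz)
qed

lemma Sz_sq: "Sz^2 = fps_const (sz^2) + Uz"
  unfolding Sz_def Yz_def by (rule sqrt_generic(1)[OF sz_ne0 Uz0])

lemma Sz_0: "Sz $ 0 = sz"
  unfolding Sz_def Yz_def by (rule sqrt_generic(2)[OF sz_ne0 Uz0])

lemma trWz: "tr Wz = fps_const (sz^2) + Uz"
  by (simp add: trW Uz_def)

lemma sqrt_wp_z_eq: "sqrt_wp_z = untr Sz"
proof -
  have below: "\<And>n m. m < -1 \<Longrightarrow> fls_nth (Sz$n) m = 0"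
    using og_Sz by (auto simp: og_def split: if_splits)
  have tru: "tr (untr Sz) = Sz" by (rule tr_untr[OF below])
  have P: "(untr Sz) ^ 2 = wp_z - 4 * fls_const (G 2)
       \<and> (\<forall>n < -1. fls_nth (untr Sz) n = 0) \<and> fls_nth (untr Sz) (-1) = 1 \<and> fls_nth (untr Sz) 0 = 0"
  proof (intro conjI allI impI)
    show "(untr Sz) ^ 2 = wp_z - 4 * fls_const (G 2)"
      by (rule tr_inj) (simp add: tr_power tru Sz_sq trWz[unfolded Wz_def])
    show "fls_nth (untr Sz) n = 0" if "n < -1" for n
      using that by (intro fps_ext) (simp add: untr_nth)
    show "fls_nth (untr Sz) (-1) = 1"
    proof (rule fps_ext)
      fix n
      show "fls_nth (untr Sz) (-1) $ n = 1 $ n"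
        using og_Sz[of n] by (cases "n = 0") (auto simp: untr_nth Sz_0 bz og_def)
    qed
    show "fls_nth (untr Sz) 0 = 0"
    proof (rule fps_ext)
      fix n
      show "fls_nth (untr Sz) 0 $ n = 0 $ n"
        using og_Sz[of n] by (cases "n = 0") (auto simp: untr_nth Sz_0 sz_0 og_def)
    qed
  qed
  have U: "s = untr Sz" if Ps: "s ^ 2 = wp_z - 4 * fls_const (G 2)
       \<and> (\<forall>n < -1. fls_nth s n = 0) \<and> fls_nth s (-1) = 1 \<and> fls_nth s 0 = 0" for s
  proof -
    have sq: "(tr s)^2 = fps_const (sz^2) + Uz"
      using Ps by (simp add: tr_power[symmetric] trWz[symmetric] Wz_def)
    define a where "a = tr s $ 0"
    have "a^2 = sz^2"
    proof -
      have "((tr s)^2) $ 0 = (fps_const (sz^2) + Uz) $ 0" using sq by simp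
      thus ?thesis by (simp add: a_def Uz0 power2_eq_square)
    qed
    hence "(a - sz) * (a + sz) = 0" by (simp add: algebra_simps power2_eq_square)
    moreover have "a + sz \<noteq> 0"
    proof
      assume "a + sz = 0"
      hence "fls_nth (a + sz) (-1) = 0" by simp
      moreover have "fls_nth a (-1) = 1" using Ps by (simp add: a_def)
      ultimately show False by (simp add: bz)
    qed
    ultimately have "a = sz" by simp
    hence a0: "tr s $ 0 = sz" by (simp add: a_def)
    have "tr s = Sz"
    proof (rule sq_unique_fps)
      show "tr s ^ 2 = Sz ^ 2" by (simp only: sq Sz_sq)
      show "tr s $ 0 = Sz $ 0" by (simp only: a0 Sz_0)
      show "Sz $ 0 \<noteq> 0" by (simp only: Sz_0 sz_ne0 not_False_eq_True)
    qed
    thus ?thesis using tru by (metis tr_inj)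
  qed
  show ?thesis unfolding sqrt_wp_z_def
    apply (rule the_equality)
     apply (rule P)
    apply (rule U)
    apply assumption
    done
qed

definition Ux :: "rat fls fps" where "Ux = evq tx Wq"
definition Yx :: "rat fls fps" where "Yx = fps_const (inverse (sx^2)) * Ux"
definition Sx :: "rat fls fps" where "Sx = fps_const sx * (fps_binomial (1/2) oo Yx)"

lemma sx_ne0: "sx \<noteq> 0" using bx by auto
lemma Ux0: "Ux $ 0 = 0" by (simp add: Ux_def Wq_def)

lemma sqrt_wp_pq_eq: "sqrt_wp_pq = Sx"
proof -
  have sq: "Sx^2 = wp_pq - 4 * G2_pq"
    unfolding Wx_dec Sx_def Yx_def Ux_def[symmetric] by (rule sqrt_generic(1)[OF sx_ne0 Ux0])
  have s0: "Sx $ 0 = sx"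
    unfolding Sx_def Yx_def by (rule sqrt_generic(2)[OF sx_ne0 Ux0])
  show ?thesis unfolding sqrt_wp_pq_def
  proof (rule the_equality)
    show "Sx^2 = wp_pq - 4 * G2_pq \<and> Sx $ 0 = (pvar + 1) / (pvar - 1) / 2"
    proof
      show "Sx^2 = wp_pq - 4 * G2_pq" by (rule sq)
      show "Sx $ 0 = (pvar + 1) / (pvar - 1) / 2" using s0 unfolding sx_def .
    qed
    fix s assume h: "s^2 = wp_pq - 4 * G2_pq \<and> s $ 0 = (pvar + 1) / (pvar - 1) / 2"
    have h1: "s^2 = Sx^2" using h sq by (simp only:)
    have h2: "s $ 0 = Sx $ 0" using h s0 unfolding sx_def by (simp only:)
    have h3: "Sx $ 0 \<noteq> 0" unfolding s0 by (rule sx_ne0)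
    show "s = Sx" by (rule sq_unique_fps[OF h1 h2 h3])
  qed
qed

lemma natdiv_const: "(of_nat m / 2 :: rat fls) = fls_const (of_nat m / 2)"
proof -
  have "fls_const (of_nat m / 2 :: rat) = fls_const (of_nat m) / fls_const 2" by (rule fls_const_divide_const[symmetric])
  also have "\<dots> = of_nat m / 2" by (simp only: fls_of_nat[symmetric] fls_const_numeral)
  finally show ?thesis by (rule sym)
qed

lemma coef_formula:
  fixes s0 t :: "rat fls"
  assumes s0: "s0 \<noteq> 0" and nk: "n \<le> k"
  shows "((fps_const s0 * (fps_binomial (1/2) oo (fps_const (inverse (s0^2)) * evq t Wq)))^(2*k+1)) $ n
       = (\<Sum>j=0..n. fls_const ((of_nat (2*k+1) / 2) gchoose j) * (evp t ((Wq^j)$n) * s0^(2*(k-j)+1)))"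
proof -
  have U0: "evq t Wq $ 0 = 0" by (simp add: Wq_def)
  have "((fps_const s0 * (fps_binomial (1/2) oo (fps_const (inverse (s0^2)) * evq t Wq)))^(2*k+1)) $ n
     = s0^(2*k+1) * (\<Sum>j=0..n. (of_nat (2*k+1) / 2 gchoose j) * (inverse (s0^2) ^ j * evp t ((Wq^j)$n)))"
    unfolding sqrt_generic(3)[OF s0 U0]
    by (simp add: fps_compose_nth power_mult_distrib fps_const_power evq_power[symmetric])
  also have "\<dots> = (\<Sum>j=0..n. fls_const ((of_nat (2*k+1) / 2) gchoose j) * (evp t ((Wq^j)$n) * s0^(2*(k-j)+1)))"
    unfolding sum_distrib_left
  proof (intro sum.cong refl)
    fix j assume j: "j \<in> {0..n}"
    hence jk: "j \<le> k" using nk by simp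
    have ex: "2*k+1 = (2*(k-j)+1) + 2*j" using jk by simp
    have "s0^(2*k+1) = s0^(2*(k-j)+1) * (s0^2)^j"
      by (subst ex) (simp only: power_add power_mult)
    hence e: "s0^(2*k+1) * inverse (s0^2) ^ j = s0^(2*(k-j)+1)"
      using s0 by (simp add: power_inverse[symmetric] field_simps)
    have g: "(of_nat (2*k+1) / 2 :: rat fls) gchoose j = fls_const ((of_nat (2*k+1) / 2) gchoose j)"
      unfolding natdiv_const by (rule gchoose_const)
    show "s0^(2*k+1) * ((of_nat (2*k+1) / 2 gchoose j) * (inverse (s0^2) ^ j * evp t ((Wq^j)$n)))
        = fls_const ((of_nat (2*k+1) / 2) gchoose j) * (evp t ((Wq^j)$n) * s0^(2*(k-j)+1))"
      unfolding g e[symmetric] by (simp add: mult_ac)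
  qed
  finally show ?thesis .
qed

lemma key_compare: "2 * fls_nth (tx^i * sx^(2*l+1)) 0 = fls_nth (tz^i * sz^(2*l+1)) (-1)"
proof -
  note fx = deriv_facts[OF pvar_ne0 pvar_ne1 Dpvar, folded sx_def tx_def]
  note fz = deriv_facts[OF Ez_ne0 Ez_ne1 DEz, folded sz_def tz_def]
  show ?thesis by (rule compare_odd[OF fx Lx bx fz Lz bz])
qed

lemma tr_sqrt_z: "tr sqrt_wp_z = Sz"
proof -
  have below: "\<And>n m. m < -1 \<Longrightarrow> fls_nth (Sz$n) m = 0"
    using og_Sz by (auto simp: og_def split: if_splits)
  show ?thesis unfolding sqrt_wp_z_eq by (rule tr_untr[OF below])
qed

lemma tr_half_pow: "tr (wp_z_half_pow k) = Sz ^ (2*k+1)"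
proof -
  have "tr (wp_z_half_pow k) = (tr Wz)^k * Sz"
    by (simp add: wp_z_half_pow_def tr_mult tr_power tr_sqrt_z Wz_def)
  also have "\<dots> = Sz^(2*k+1)" by (simp add: trWz Sz_sq[symmetric] power_mult[symmetric] power_add mult.commute)
  finally show ?thesis .
qed

lemma final_sum:
  "2 * fls_nth (\<Sum>j=0..n. fls_const (c j) * (evp tx (P j) * sx^(2*(k-j)+1))) 0
   = fls_nth (\<Sum>j=0..n. fls_const (c j) * (evp tz (P j) * sz^(2*(k-j)+1))) (-1)"
proof -
  have "2 * fls_nth (\<Sum>j=0..n. fls_const (c j) * (evp tx (P j) * sx^(2*(k-j)+1))) 0
      = (\<Sum>j=0..n. c j * (2 * fls_nth (evp tx (P j) * sx^(2*(k-j)+1)) 0))"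
    unfolding fls_nth_sum sum_distrib_left
    by (intro sum.cong refl) (simp only: fls_mult_const_nth mult.left_commute)
  also have "\<dots> = (\<Sum>j=0..n. c j * fls_nth (evp tz (P j) * sz^(2*(k-j)+1)) (-1))"
    by (intro sum.cong refl arg_cong[where f = "\<lambda>x. c _ * x"] lin_compare key_compare)
  also have "\<dots> = fls_nth (\<Sum>j=0..n. fls_const (c j) * (evp tz (P j) * sz^(2*(k-j)+1))) (-1)"
    by (simp add: fls_nth_sum)
  finally show ?thesis .
qed

theorem proposition3p5:
  fixes k :: nat
  shows "\<forall>n \<le> k. fps_nth (LHS k) n = fps_nth (RHS k) n"
proof (intro allI impI)
  fix n assume nk: "n \<le> k"
  have L: "fps_nth (LHS k) n = fls_nth ((Sz^(2*k+1)) $ n) (-1)"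
    unfolding LHS_def fls_residue_def tr_half_pow[symmetric] by simp
  have R: "fps_nth (RHS k) n = 2 * fls_nth ((Sx^(2*k+1)) $ n) 0"
    unfolding RHS_def sqrt_wp_pq_eq const_term_p_def by (simp add: numeral_fps_const)
  have Sz': "Sz = fps_const sz * (fps_binomial (1/2) oo (fps_const (inverse (sz^2)) * evq tz Wq))"
    by (simp add: Sz_def Yz_def Uz_def)
  have Sx': "Sx = fps_const sx * (fps_binomial (1/2) oo (fps_const (inverse (sx^2)) * evq tx Wq))"
    by (simp add: Sx_def Yx_def Ux_def)
  show "fps_nth (LHS k) n = fps_nth (RHS k) n"
    unfolding L R Sz' Sx' coef_formula[OF sz_ne0 nk] coef_formula[OF sx_ne0 nk]
    by (rule final_sum[symmetric])
qed

end
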